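(* For every instance, $$\mathrm{opt}_M\text{-}\mathrm{SUM}\le \mathrm{opt}_D\text{-}\mathrm{EMP}\qquad\text{and}\qquad \mathrm{opt}_M\text{-}\mathrm{MAX}\le\mathrm{opt}_D\text{-}\mathrm{WMP}.$$
   Context: An instance consists of a finite set $E$ of elements with nonnegative weights $(p_e)$ (normalized $\sum_ep_e=1$ for SUM objectives, $\max_ep_e=1$ for MAX objectives) and $m$ tests, test $i$ being a subset $s_i\subseteq E$. A deterministic schedule is a fixed infinite test sequence $\sigma_1,\sigma_2,\dots$; a memoryless schedule draws each $\sigma_t$ i.i.d. from a distribution $q$ on tests. Detection time $T(e,t)=\mathbb{E}[1+\min\{h\ge0:e\in s_{\sigma_{t+h}}\}]$, $M_t[e]=\sup_tT(e,t)$, $E_t[e]=\lim_H\frac1H\sum_{t\le H}T(e,t)$; valid schedules have $M_t[e]<\infty$ and $E_t[e]$ existing for all $e$, and convergent test frequencies $\lim_H\frac1H\sum_{t\le H}\Pr[\sigma_t=i]$. $\mathrm{EMP}=\sum_ep_eM_t[e]$, $\mathrm{WMP}=\sup_{e,t}p_eT(e,t)$. $\mathrm{opt}_D\text{-}X$ is the infimum of $X$ over valid deterministic schedules; $\mathrm{opt}_M\text{-}\mathrm{SUM}=\inf_q\sum_ep_e/Q_e$ and $\mathrm{opt}_M\text{-}\mathrm{MAX}=\inf_q\max_ep_e/Q_e$ over distributions $q$ on tests, where $Q_e=\sum_{i:e\in s_i}q_i$ (these are the optimal values of the SUM and MAX objectives over memoryless schedules). *)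

theory Defs
  imports Complex_Main "HOL-Library.Extended_Real"
begin

text \<open>Instance: finite element set E, weights p, tests s 0, ..., s (m-1).
  A deterministic schedule is sigma :: nat => nat (sigma t = index of the test at time t).\<close>

definition det_time :: "(nat \<Rightarrow> 'e set) \<Rightarrow> (nat \<Rightarrow> nat) \<Rightarrow> 'e \<Rightarrow> nat \<Rightarrow> ereal" where
  "det_time s \<sigma> e t =
     (if \<exists>h. e \<in> s (\<sigma> (t + h))
      then ereal (real (1 + (LEAST h. e \<in> s (\<sigma> (t + h))))) else \<infinity>)"

definition max_time :: "(nat \<Rightarrow> 'e set) \<Rightarrow> (nat \<Rightarrow> nat) \<Rightarrow> 'e \<Rightarrow> ereal" where
  "max_time s \<sigma> e = (SUP t. det_time s \<sigma> e t)"

definition valid_det :: "'e set \<Rightarrow> nat \<Rightarrow> (nat \<Rightarrow> 'e set) \<Rightarrow> (nat \<Rightarrow> nat) \<Rightarrow> bool" where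
  "valid_det E m s \<sigma> \<longleftrightarrow>
     (\<forall>t. \<sigma> t < m) \<and>
     (\<forall>e\<in>E. max_time s \<sigma> e < \<infinity>) \<and>
     (\<forall>e\<in>E. convergent (\<lambda>H. (\<Sum>t<H. real_of_ereal (det_time s \<sigma> e t)) / real H)) \<and>
     (\<forall>i<m. convergent (\<lambda>H. real (card {t. t < H \<and> \<sigma> t = i}) / real H))"

definition EMP :: "'e set \<Rightarrow> ('e \<Rightarrow> real) \<Rightarrow> (nat \<Rightarrow> 'e set) \<Rightarrow> (nat \<Rightarrow> nat) \<Rightarrow> ereal" where
  "EMP E p s \<sigma> = (\<Sum>e\<in>E. ereal (p e) * max_time s \<sigma> e)"

definition WMP :: "'e set \<Rightarrow> ('e \<Rightarrow> real) \<Rightarrow> (nat \<Rightarrow> 'e set) \<Rightarrow> (nat \<Rightarrow> nat) \<Rightarrow> ereal" where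
  "WMP E p s \<sigma> = (SUP e\<in>E. SUP t. ereal (p e) * det_time s \<sigma> e t)"

definition optD_EMP :: "'e set \<Rightarrow> ('e \<Rightarrow> real) \<Rightarrow> nat \<Rightarrow> (nat \<Rightarrow> 'e set) \<Rightarrow> ereal" where
  "optD_EMP E p m s = (INF \<sigma>\<in>{\<sigma>. valid_det E m s \<sigma>}. EMP E p s \<sigma>)"

definition optD_WMP :: "'e set \<Rightarrow> ('e \<Rightarrow> real) \<Rightarrow> nat \<Rightarrow> (nat \<Rightarrow> 'e set) \<Rightarrow> ereal" where
  "optD_WMP E p m s = (INF \<sigma>\<in>{\<sigma>. valid_det E m s \<sigma>}. WMP E p s \<sigma>)"

definition test_dist :: "nat \<Rightarrow> (nat \<Rightarrow> real) \<Rightarrow> bool" where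
  "test_dist m q \<longleftrightarrow> (\<forall>i<m. 0 \<le> q i) \<and> (\<Sum>i<m. q i) = 1"

definition cover_prob :: "nat \<Rightarrow> (nat \<Rightarrow> 'e set) \<Rightarrow> (nat \<Rightarrow> real) \<Rightarrow> 'e \<Rightarrow> real" where
  "cover_prob m s q e = (\<Sum>i\<in>{i. i < m \<and> e \<in> s i}. q i)"

text \<open>p / Q with conventions 0 / Q = 0 and p / 0 = \<infinity> for p > 0.\<close>
definition ratio :: "real \<Rightarrow> real \<Rightarrow> ereal" where
  "ratio a b = (if a = 0 then 0 else if b = 0 then \<infinity> else ereal (a / b))"

definition optM_SUM :: "'e set \<Rightarrow> ('e \<Rightarrow> real) \<Rightarrow> nat \<Rightarrow> (nat \<Rightarrow> 'e set) \<Rightarrow> ereal" where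
  "optM_SUM E p m s = (INF q\<in>{q. test_dist m q}. \<Sum>e\<in>E. ratio (p e) (cover_prob m s q e))"

definition optM_MAX :: "'e set \<Rightarrow> ('e \<Rightarrow> real) \<Rightarrow> nat \<Rightarrow> (nat \<Rightarrow> 'e set) \<Rightarrow> ereal" where
  "optM_MAX E p m s = (INF q\<in>{q. test_dist m q}. SUP e\<in>E. ratio (p e) (cover_prob m s q e))"

end

theory Submission imports Defs begin

lemma attain:
  assumes "max_time s \<sigma> e < \<infinity>"
  shows "\<exists>K t0. K \<ge> 1 \<and> det_time s \<sigma> e t0 = ereal (real K) \<and> max_time s \<sigma> e = ereal (real K)
          \<and> (\<forall>t. \<exists>h<K. e \<in> s (\<sigma> (t + h)))"
proof -
  have le: "det_time s \<sigma> e t \<le> max_time s \<sigma> e" for t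
    unfolding max_time_def by (rule SUP_upper) simp
  have ge1: "det_time s \<sigma> e t \<ge> 1" for t
    unfolding det_time_def by auto
  obtain b where b: "max_time s \<sigma> e = ereal b"
    using assms le[of 0] ge1[of 0] by (cases "max_time s \<sigma> e") auto
  have ex: "\<exists>h. e \<in> s (\<sigma> (t + h))" for t
  proof (rule ccontr)
    assume "\<not> ?thesis"
    then have "det_time s \<sigma> e t = \<infinity>" unfolding det_time_def by auto
    with le[of t] b show False by simp
  qed
  define f where "f t = 1 + (LEAST h. e \<in> s (\<sigma> (t + h)))" for t
  have dt: "det_time s \<sigma> e t = ereal (real (f t))" for t
    unfolding det_time_def f_def using ex[of t] by simp
  have fb: "real (f t) \<le> b" for t using le[of t] b dt[of t] by simp
  have fb2: "f t \<le> nat (ceiling b)" for t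
  proof -
    have "real_of_int (int (f t)) \<le> real_of_int \<lceil>b\<rceil>" using fb[of t] le_of_int_ceiling[of b] by linarith
    then have "int (f t) \<le> \<lceil>b\<rceil>" by (simp only: of_int_le_iff)
    then show ?thesis by simp
  qed
  have fin: "finite (range f)"
    by (rule finite_subset[of _ "{..nat (ceiling b)}"]) (auto simp: fb2)
  define K where "K = Max (range f)"
  have "K \<in> range f" unfolding K_def using fin by (intro Max_in) auto
  then obtain t0 where t0: "f t0 = K" by auto
  have fK: "f t \<le> K" for t unfolding K_def using fin by (intro Max_ge) auto
  have K1: "K \<ge> 1" using t0 unfolding f_def by auto
  have mt: "max_time s \<sigma> e = ereal (real K)"
  proof (rule antisym)
    show "max_time s \<sigma> e \<le> ereal (real K)"
      unfolding max_time_def by (rule SUP_least) (simp add: dt fK)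
    show "ereal (real K) \<le> max_time s \<sigma> e" using le[of t0] dt[of t0] t0 by simp
  qed
  have cov: "\<exists>h<K. e \<in> s (\<sigma> (t + h))" for t
  proof -
    have "e \<in> s (\<sigma> (t + (LEAST h. e \<in> s (\<sigma> (t + h)))))" using ex[of t] by (rule LeastI_ex)
    moreover have "(LEAST h. e \<in> s (\<sigma> (t + h))) < K" using fK[of t] unfolding f_def by simp
    ultimately show ?thesis by blast
  qed
  show ?thesis using K1 dt[of t0] t0 mt cov by blast
qed

lemma count_lb:
  assumes "\<forall>t. \<exists>h<K. D (t + h)"
  shows "j \<le> card {t. t < j * K \<and> D t}"
proof (induction j)
  case 0 then show ?case by simp
next
  case (Suc j)
  obtain h where h: "h < K" "D (j * K + h)" using assms by blast
  have sub: "insert (j*K + h) {t. t < j * K \<and> D t} \<subseteq> {t. t < Suc j * K \<and> D t}"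
    using h by auto
  have "card (insert (j*K + h) {t. t < j * K \<and> D t}) = Suc (card {t. t < j * K \<and> D t})"
    by (rule card_insert_disjoint) auto
  moreover have "card (insert (j*K + h) {t. t < j * K \<and> D t}) \<le> card {t. t < Suc j * K \<and> D t}"
    by (rule card_mono[OF _ sub]) auto
  ultimately show ?case using Suc by simp
qed

lemma count_lb2:
  assumes "\<forall>t. \<exists>h<K. D (t + h)"
  shows "H div K \<le> card {t. t < H \<and> D t}"
proof -
  have "H div K \<le> card {t. t < (H div K) * K \<and> D t}" by (rule count_lb[OF assms])
  also have "\<dots> \<le> card {t. t < H \<and> D t}"
    by (rule card_mono) (auto intro: order.strict_trans2 div_times_less_eq_dividend)
  finally show ?thesis .
qed

lemma freq_lb:
  assumes "\<forall>t. \<exists>h<K. D (t + h)" "K \<ge> 1"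
    and "(\<lambda>H. real (card {t. t < H \<and> D t}) / real H) \<longlonglongrightarrow> L"
  shows "1 / real K \<le> L"
proof (rule LIMSEQ_le[OF _ assms(3)])
  show "(\<lambda>H. 1 / real K - 1 / real H) \<longlonglongrightarrow> 1 / real K"
    using tendsto_diff[OF tendsto_const lim_inverse_n'] by simp
  show "\<exists>N. \<forall>n\<ge>N. 1 / real K - 1 / real n \<le> real (card {t. t < n \<and> D t}) / real n"
  proof (intro exI allI impI)
    fix n :: nat assume n: "n \<ge> 1"
    have "n < (n div K + 1) * K" using assms(2)
      by (metis add.commute div_mult_mod_eq mod_less_divisor distrib_right mult_1 add_less_cancel_left less_le_trans order_refl le_eq_less_or_eq zero_less_one)
    then have "real n < (real (n div K) + 1) * real K" by (metis of_nat_1 of_nat_add of_nat_less_iff of_nat_mult)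
    then have a: "real n / real K - 1 \<le> real (n div K)" using assms(2) by (simp add: field_simps)
    have b: "real (n div K) \<le> real (card {t. t < n \<and> D t})" using count_lb2[OF assms(1)] by simp
    have "1 / real K - 1 / real n = (real n / real K - 1) / real n" using n by (simp add: field_simps)
    also have "\<dots> \<le> real (card {t. t < n \<and> D t}) / real n"
      using a b n by (intro divide_right_mono) auto
    finally show "1 / real K - 1 / real n \<le> real (card {t. t < n \<and> D t}) / real n" .
  qed
qed


lemma card_part:
  fixes H :: nat and \<sigma> :: "nat \<Rightarrow> nat"
  assumes "finite I"
  shows "card {t. t < H \<and> \<sigma> t \<in> I} = (\<Sum>i\<in>I. card {t. t < H \<and> \<sigma> t = (i::nat)})"
proof -
  have "{t. t < H \<and> \<sigma> t \<in> I} = (\<Union>i\<in>I. {t. t < H \<and> \<sigma> t = i})" by auto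
  then have "card {t. t < H \<and> \<sigma> t \<in> I} = card (\<Union>i\<in>I. {t. t < H \<and> \<sigma> t = i})" by simp
  also have "\<dots> = (\<Sum>i\<in>I. card {t. t < H \<and> \<sigma> t = i})"
  proof (rule card_UN_disjoint[OF assms])
    show "\<forall>i\<in>I. finite {t. t < H \<and> \<sigma> t = i}"
      by (auto intro: finite_subset[of _ "{..<H}"])
  qed auto
  finally show ?thesis .
qed

lemma freq_sum:
  fixes m :: nat and \<sigma> :: "nat \<Rightarrow> nat"
  assumes conv: "\<forall>i<m. convergent (\<lambda>H. real (card {t. t < H \<and> \<sigma> t = i}) / real H)"
    and I: "I \<subseteq> {..<m}"
  shows "(\<lambda>H. real (card {t. t < H \<and> \<sigma> t \<in> I}) / real H) \<longlonglongrightarrow>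
     (\<Sum>i\<in>I. lim (\<lambda>H. real (card {t. t < H \<and> \<sigma> t = i}) / real H))"
proof -
  have fin: "finite I" by (rule finite_subset[OF I finite_lessThan])
  have "(\<lambda>H. \<Sum>i\<in>I. real (card {t. t < H \<and> \<sigma> t = i}) / real H) \<longlonglongrightarrow>
     (\<Sum>i\<in>I. lim (\<lambda>H. real (card {t. t < H \<and> \<sigma> t = i}) / real H))"
  proof (rule tendsto_sum)
    fix i assume "i \<in> I"
    then have "i < m" using I by auto
    then have "convergent (\<lambda>H. real (card {t. t < H \<and> \<sigma> t = i}) / real H)" using conv by simp
    then show "(\<lambda>H. real (card {t. t < H \<and> \<sigma> t = i}) / real H) \<longlonglongrightarrow>
      lim (\<lambda>H. real (card {t. t < H \<and> \<sigma> t = i}) / real H)" by (simp only: convergent_LIMSEQ_iff)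
  qed
  moreover have "(\<Sum>i\<in>I. real (card {t. t < H \<and> \<sigma> t = i}) / real H) =
      real (card {t. t < H \<and> \<sigma> t \<in> I}) / real H" for H
    unfolding card_part[OF fin, of H \<sigma>] of_nat_sum sum_divide_distrib ..
  ultimately show ?thesis by simp
qed

lemma sched:
  assumes v: "valid_det E m s \<sigma>"
  defines "q \<equiv> \<lambda>i. lim (\<lambda>H. real (card {t. t < H \<and> \<sigma> t = i}) / real H)"
  shows "test_dist m q"
    and "e \<in> E \<Longrightarrow> \<exists>K t0. K \<ge> 1 \<and> det_time s \<sigma> e t0 = ereal (real K) \<and> max_time s \<sigma> e = ereal (real K)
          \<and> 1 / real K \<le> cover_prob m s q e"
proof -
  have lt: "\<forall>t. \<sigma> t < m" and conv: "\<forall>i<m. convergent (\<lambda>H. real (card {t. t < H \<and> \<sigma> t = i}) / real H)"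
    and mt: "\<forall>e\<in>E. max_time s \<sigma> e < \<infinity>"
    using v unfolding valid_det_def by auto
  show "test_dist m q" unfolding test_dist_def
  proof (intro conjI allI impI)
    fix i assume "i < m"
    then have "(\<lambda>H. real (card {t. t < H \<and> \<sigma> t = i}) / real H) \<longlonglongrightarrow> q i"
      using conv unfolding q_def by (auto simp: convergent_LIMSEQ_iff)
    then show "0 \<le> q i" by (rule LIMSEQ_le_const) auto
  next
    have A: "(\<lambda>H. real (card {t. t < H \<and> \<sigma> t \<in> {..<m}}) / real H) \<longlonglongrightarrow> (\<Sum>i<m. q i)"
      using freq_sum[OF conv, of "{..<m}"] unfolding q_def by simp
    have "{t. t < H \<and> \<sigma> t \<in> {..<m}} = {..<H}" for H using lt by auto
    then have "\<forall>\<^sub>F H in sequentially. real (card {t. t < H \<and> \<sigma> t \<in> {..<m}}) / real H = 1"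
      by (auto simp: eventually_sequentially intro!: exI[of _ 1])
    then have "(\<lambda>H. real (card {t. t < H \<and> \<sigma> t \<in> {..<m}}) / real H) \<longlonglongrightarrow> 1"
      by (simp add: tendsto_eventually)
    with A show "(\<Sum>i<m. q i) = 1" using LIMSEQ_unique by blast
  qed
  assume e: "e \<in> E"
  obtain K t0 where K: "K \<ge> 1" "det_time s \<sigma> e t0 = ereal (real K)" "max_time s \<sigma> e = ereal (real K)"
    "\<forall>t. \<exists>h<K. e \<in> s (\<sigma> (t + h))"
    using attain[of s \<sigma> e] mt e by blast
  define I where "I = {i. i < m \<and> e \<in> s i}"
  have "{t. t < H \<and> \<sigma> t \<in> I} = {t. t < H \<and> e \<in> s (\<sigma> t)}" for H using lt unfolding I_def by auto
  then have "(\<lambda>H. real (card {t. t < H \<and> e \<in> s (\<sigma> t)}) / real H) \<longlonglongrightarrow> cover_prob m s q e"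
    using freq_sum[OF conv, of I] unfolding q_def cover_prob_def I_def by auto
  then have "1 / real K \<le> cover_prob m s q e"
    using K(1,4) by (intro freq_lb[of K "\<lambda>t. e \<in> s (\<sigma> t)"]) auto
  then show "\<exists>K t0. K \<ge> 1 \<and> det_time s \<sigma> e t0 = ereal (real K) \<and> max_time s \<sigma> e = ereal (real K)
          \<and> 1 / real K \<le> cover_prob m s q e" using K by blast
qed

lemma ratio_le:
  assumes "0 \<le> a" "K \<ge> (1::nat)" "1 / real K \<le> Q"
  shows "ratio a Q \<le> ereal a * ereal (real K)"
proof (cases "a = 0")
  case True then show ?thesis by (simp add: ratio_def)
next
  case False
  have "1 / real K > 0" using assms(2) by simp
  then have Q: "Q > 0" using assms(3) by linarith
  have "a / Q \<le> a * real K"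
  proof -
    have "1 \<le> Q * real K" using assms(2,3) by (simp add: field_simps)
    then have "a \<le> a * (Q * real K)" using assms(1) by (simp add: mult_le_cancel_left1)
    then show ?thesis using Q by (simp add: field_simps)
  qed
  then show ?thesis using False Q by (simp add: ratio_def)
qed

theorem lemma8:
  fixes E :: "'e set" and p :: "'e \<Rightarrow> real" and m :: nat and s :: "nat \<Rightarrow> 'e set"
  assumes "finite E"
    and "\<forall>e\<in>E. 0 \<le> p e"
    and "\<forall>i<m. s i \<subseteq> E"
  shows "((\<Sum>e\<in>E. p e) = 1 \<longrightarrow> optM_SUM E p m s \<le> optD_EMP E p m s) \<and>
         ((\<forall>e\<in>E. p e \<le> 1) \<and> (\<exists>e\<in>E. p e = 1) \<longrightarrow> optM_MAX E p m s \<le> optD_WMP E p m s)"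
proof (intro conjI impI)
  show "optM_SUM E p m s \<le> optD_EMP E p m s"
    unfolding optD_EMP_def
  proof (rule INF_greatest)
    fix \<sigma> assume "\<sigma> \<in> {\<sigma>. valid_det E m s \<sigma>}"
    then have v: "valid_det E m s \<sigma>" by simp
    define q where "q = (\<lambda>i. lim (\<lambda>H. real (card {t. t < H \<and> \<sigma> t = i}) / real H))"
    have td: "test_dist m q" using sched(1)[OF v] unfolding q_def .
    have "optM_SUM E p m s \<le> (\<Sum>e\<in>E. ratio (p e) (cover_prob m s q e))"
      unfolding optM_SUM_def using td by (intro INF_lower) simp
    also have "\<dots> \<le> (\<Sum>e\<in>E. ereal (p e) * max_time s \<sigma> e)"
    proof (rule sum_mono)
      fix e assume e: "e \<in> E"
      obtain K t0 where K: "K \<ge> 1" "max_time s \<sigma> e = ereal (real K)" "1 / real K \<le> cover_prob m s q e"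
        using sched(2)[OF v e] unfolding q_def by blast
      show "ratio (p e) (cover_prob m s q e) \<le> ereal (p e) * max_time s \<sigma> e"
        using ratio_le[OF _ K(1) K(3)] assms(2) e K(2) by simp
    qed
    finally show "optM_SUM E p m s \<le> EMP E p s \<sigma>" unfolding EMP_def .
  qed
next
  show "optM_MAX E p m s \<le> optD_WMP E p m s"
    unfolding optD_WMP_def
  proof (rule INF_greatest)
    fix \<sigma> assume "\<sigma> \<in> {\<sigma>. valid_det E m s \<sigma>}"
    then have v: "valid_det E m s \<sigma>" by simp
    define q where "q = (\<lambda>i. lim (\<lambda>H. real (card {t. t < H \<and> \<sigma> t = i}) / real H))"
    have td: "test_dist m q" using sched(1)[OF v] unfolding q_def .
    have "optM_MAX E p m s \<le> (SUP e\<in>E. ratio (p e) (cover_prob m s q e))"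
      unfolding optM_MAX_def using td by (intro INF_lower) simp
    also have "\<dots> \<le> WMP E p s \<sigma>"
      unfolding WMP_def
    proof (rule SUP_mono)
      fix e assume e: "e \<in> E"
      obtain K t0 where K: "K \<ge> 1" "det_time s \<sigma> e t0 = ereal (real K)" "1 / real K \<le> cover_prob m s q e"
        using sched(2)[OF v e] unfolding q_def by blast
      have "ratio (p e) (cover_prob m s q e) \<le> ereal (p e) * det_time s \<sigma> e t0"
        using ratio_le[OF _ K(1) K(3)] assms(2) e K(2) by simp
      also have "\<dots> \<le> (SUP t. ereal (p e) * det_time s \<sigma> e t)" by (rule SUP_upper) simp
      finally show "\<exists>e'\<in>E. ratio (p e) (cover_prob m s q e) \<le> (SUP t. ereal (p e') * det_time s \<sigma> e' t)"
        using e by blast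
    qed
    finally show "optM_MAX E p m s \<le> WMP E p s \<sigma>" .
  qed
qed

end
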